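(* (1) There exists a sequent that is not cut-free provable in $\mathtt{GTPDL}$ but is cut-free provable in $\mathtt{CGTPDL}$; moreover, there exists a sequent that is not Fischer–Ladner-cut provable in $\mathtt{GTPDL}$ but is cut-free provable in $\mathtt{CGTPDL}$. (2) There exists a sequent that is provable in both $\mathtt{GTPDL}$ and $\mathtt{CGTPDL}$, but is cut-free provable in neither.
   Context: $\mathtt{TPDL}$ formulas/programs over sets $\mathsf{Prop}$, $\mathsf{AtProg}$: $\varphi ::= \bot \mid p \mid (\varphi\to\varphi) \mid [\pi]\varphi \mid [\pi]^{\leftarrow}\varphi$, $\pi ::= \alpha \mid \pi;\pi \mid \pi\cup\pi \mid \pi^{*} \mid \varphi?$. $[\pi]\Gamma=\{[\pi]\varphi:\varphi\in\Gamma\}$, similarly $[\pi]^{\leftarrow}\Gamma$. A sequent is a pair $\Gamma\Rightarrow\Delta$ of finite sets of formulas. Common rules (premises / conclusion): (Ax) / $\Gamma\Rightarrow\Delta$, $\Gamma\cap\Delta\neq\emptyset$; ($\bot$) / $\Gamma,\bot\Rightarrow\Delta$; ($\to$L) $\Gamma\Rightarrow\varphi,\Delta$ and $\Gamma,\psi\Rightarrow\Delta$ / $\Gamma,\varphi\to\psi\Rightarrow\Delta$; ($\to$R) $\Gamma,\varphi\Rightarrow\psi,\Delta$ / $\Gamma\Rightarrow\varphi\to\psi,\Delta$; (Wk) $\Gamma\Rightarrow\Delta$ / $\Gamma'\Rightarrow\Delta'$, $\Gamma\subseteq\Gamma'$, $\Delta\subseteq\Delta'$; (Cut) $\Gamma\Rightarrow\varphi,\Delta$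 and $\Gamma,\varphi\Rightarrow\Delta$ / $\Gamma\Rightarrow\Delta$ ($\varphi$ is the cut formula); ($[\,]$) $\Gamma\Rightarrow\varphi,[\pi]^{\leftarrow}\Delta$ / $[\pi]\Gamma\Rightarrow[\pi]\varphi,\Delta$; ($[\,]^{\leftarrow}$) $\Gamma\Rightarrow\varphi,[\pi]\Delta$ / $[\pi]^{\leftarrow}\Gamma\Rightarrow[\pi]^{\leftarrow}\varphi,\Delta$; ($[;]$L) $\Gamma,[\pi_0][\pi_1]\varphi\Rightarrow\Delta$ / $\Gamma,[\pi_0;\pi_1]\varphi\Rightarrow\Delta$; ($[;]$R) $\Gamma\Rightarrow[\pi_0][\pi_1]\varphi,\Delta$ / $\Gamma\Rightarrow[\pi_0;\pi_1]\varphi,\Delta$; ($[\cup]$L) $\Gamma,[\pi_0]\varphi,[\pi_1]\varphi\Rightarrow\Delta$ / $\Gamma,[\pi_0\cup\pi_1]\varphi\Rightarrow\Delta$; ($[\cup]$R) $\Gamma\Rightarrow\Delta,[\pi_0]\varphi$ and $\Gamma\Rightarrow\Delta,[\pi_1]\varphi$ / $\Gamma\Rightarrow[\pi_0\cup\pi_1]\varphi,\Delta$; ($[*]$L) $\Gamma,\varphi,[\pi][\pi^*]\varphi\Rightarrow\Delta$ / $\Gamma,[\pi^*]\varphi\Rightarrow\Delta$; ($[?]$L) $\Gamma\Rightarrow\varphi,\Delta$ and $\Gamma,\psi\Rightarrow\Delta$ / $\Gamma,[\varphi?]\psi\Rightarrow\Delta$; ($[?]$R) $\Gamma,\varphi\Rightarrow\psi,\Delta$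 / $\Gamma\Rightarrow[\varphi?]\psi,\Delta$. $\mathtt{GTPDL}$ adds ($[*]$R) $\Gamma,\varphi\Rightarrow[\pi]\varphi$ / $[\pi^*]\Gamma,\varphi\Rightarrow[\pi^*]\varphi$; its proofs are finite trees of rule instances with all leaves Ax/$\bot$. $\mathtt{CGTPDL}$ instead adds (C-s) $\Gamma\Rightarrow\varphi,\Delta$ and $\Gamma\Rightarrow[\pi][\pi^*]\varphi,\Delta$ / $\Gamma\Rightarrow[\pi^*]\varphi,\Delta$; its proofs are finite trees of rule instances whose leaves are Ax/$\bot$ instances or buds, each bud assigned a companion (an inner node with the same sequent), such that in the graph identifying buds with companions every infinite path has a tail followed by a trace with infinitely many progress points. Here a trace along a path $(\Gamma_i\Rightarrow\Delta_i)$ is a sequence $\tau_i\in\Delta_i$ which at ($\to$R), ($[;]$R), ($[\cup]$R), ($[?]$R), (C-s) either stays the same or passes from the principal formula to its component in the chosen premise ($\psi$ for $\varphi\to\psi$; $[\pi_0][\pi_1]\varphi$; $[\pi_j]\varphi$; $\psi$ for $[\varphi?]\psi$; $\varphi$ or $[\pi][\pi^*]\varphi$ for $[\pi^*]\varphi$, the latter a progress point), at ($[\,]$)/($[\,]^{\leftarrow}$) passes from the principal $[\pi]\varphi$/$[\pi]^{\leftarrow}\varphi$ to $\varphi$, and otherwise stays the same. A proof is cut-free if it contains no instance of Cut. The Fischer–Ladner closure $\mathrm{FL}(\Lambda)$ of a set of formulas: $\mathrm{FL}(\bot)=\{\bot\}$, $\mathrm{FL}(p)=\{p\}$, $\mathrm{FL}(\psi_0\to\psi_1)=\{\psi_0\to\psi_1\}\cup\mathrm{FL}(\psi_0)\cup\mathrm{FL}(\psi_1)$,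 $\mathrm{FL}([\pi]\psi)=\mathrm{FL}_\Box([\pi]\psi)\cup\mathrm{FL}(\psi)$, $\mathrm{FL}([\pi]^{\leftarrow}\psi)=\mathrm{FL}_\Box([\pi]^{\leftarrow}\psi)\cup\mathrm{FL}(\psi)$, where $\mathrm{FL}_\Box([\alpha]\psi)=\{[\alpha]\psi\}$, $\mathrm{FL}_\Box([\pi_0;\pi_1]\psi)=\{[\pi_0;\pi_1]\psi\}\cup\mathrm{FL}_\Box([\pi_0][\pi_1]\psi)\cup\mathrm{FL}_\Box([\pi_1]\psi)$, $\mathrm{FL}_\Box([\pi_0\cup\pi_1]\psi)=\{[\pi_0\cup\pi_1]\psi\}\cup\mathrm{FL}_\Box([\pi_0]\psi)\cup\mathrm{FL}_\Box([\pi_1]\psi)$, $\mathrm{FL}_\Box([\pi^*]\psi)=\{[\pi^*]\psi\}\cup\mathrm{FL}_\Box([\pi][\pi^*]\psi)$, $\mathrm{FL}_\Box([\psi_0?]\psi_1)=\{[\psi_0?]\psi_1\}\cup\mathrm{FL}(\psi_0)$, and the backwards versions analogously except $\mathrm{FL}_\Box([\pi_0;\pi_1]^{\leftarrow}\psi)=\{[\pi_0;\pi_1]^{\leftarrow}\psi\}\cup\mathrm{FL}_\Box([\pi_1]^{\leftarrow}[\pi_0]^{\leftarrow}\psi)\cup\mathrm{FL}_\Box([\pi_0]^{\leftarrow}\psi)$; $\mathrm{FL}(\Lambda)=\bigcup_{\varphi\in\Lambda}\mathrm{FL}(\varphi)$. A Cut instance with conclusion $\Gamma\Rightarrow\Delta$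 is a Fischer–Ladner-cut if its cut formula lies in $\mathrm{FL}(\Gamma\cup\Delta)$; a sequent is Fischer–Ladner-cut provable in a system if it has a proof there in which every Cut instance is a Fischer–Ladner-cut. *)

theory Defs
  imports Main
begin

datatype fm = Bot | Pr nat | Imp fm fm | Box pg fm | BoxC pg fm
and pg = At nat | Seq pg pg | Ch pg pg | Star pg | Test fm

type_synonym sequent = "fm set \<times> fm set"

definition fin_seq :: "sequent \<Rightarrow> bool" where
  "fin_seq s \<longleftrightarrow> finite (fst s) \<and> finite (snd s)"

text \<open>Rule labels carry the principal formula data. StarG is the GTPDL rule
([*]R); CS is the CGTPDL rule (C-s).\<close>

datatype rule = RAx | RBot | ImpL fm fm | ImpR fm fm | Wk | Cut fm
  | BoxR pg fm | BoxCR pg fm | SeqL pg pg fm | SeqR pg pg fm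
  | ChL pg pg fm | ChR pg pg fm | StarL pg fm | TestL fm fm | TestR fm fm
  | StarG pg fm | CS pg fm

inductive step :: "rule \<Rightarrow> sequent \<Rightarrow> sequent list \<Rightarrow> bool" where
  ax: "G \<inter> D \<noteq> {} \<Longrightarrow> step RAx (G, D) []"
| bot: "Bot \<in> G \<Longrightarrow> step RBot (G, D) []"
| impL: "step (ImpL a b) (insert (Imp a b) G, D) [(G, insert a D), (insert b G, D)]"
| impR: "step (ImpR a b) (G, insert (Imp a b) D) [(insert a G, insert b D)]"
| wk: "G \<subseteq> G' \<Longrightarrow> D \<subseteq> D' \<Longrightarrow> step Wk (G', D') [(G, D)]"
| cut: "step (Cut a) (G, D) [(G, insert a D), (insert a G, D)]"
| box: "step (BoxR p a) (Box p ` G, insert (Box p a) D) [(G, insert a (BoxC p ` D))]"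
| boxc: "step (BoxCR p a) (BoxC p ` G, insert (BoxC p a) D) [(G, insert a (Box p ` D))]"
| seqL: "step (SeqL p q a) (insert (Box (Seq p q) a) G, D) [(insert (Box p (Box q a)) G, D)]"
| seqR: "step (SeqR p q a) (G, insert (Box (Seq p q) a) D) [(G, insert (Box p (Box q a)) D)]"
| chL: "step (ChL p q a) (insert (Box (Ch p q) a) G, D) [(insert (Box p a) (insert (Box q a) G), D)]"
| chR: "step (ChR p q a) (G, insert (Box (Ch p q) a) D)
          [(G, insert (Box p a) D), (G, insert (Box q a) D)]"
| starL: "step (StarL p a) (insert (Box (Star p) a) G, D)
          [(insert a (insert (Box p (Box (Star p) a)) G), D)]"
| testL: "step (TestL a b) (insert (Box (Test a) b) G, D) [(G, insert a D), (insert b G, D)]"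
| testR: "step (TestR a b) (G, insert (Box (Test a) b) D) [(insert a G, insert b D)]"
| starG: "step (StarG p a) (insert a (Box (Star p) ` G), {Box (Star p) a}) [(insert a G, {Box p a})]"
| cs: "step (CS p a) (G, insert (Box (Star p) a) D)
          [(G, insert a D), (G, insert (Box p (Box (Star p) a)) D)]"

definition rstep :: "rule \<Rightarrow> sequent \<Rightarrow> sequent list \<Rightarrow> bool" where
  "rstep r s ps \<longleftrightarrow> step r s ps \<and> fin_seq s \<and> (\<forall>q\<in>set ps. fin_seq q)"

fun is_CS :: "rule \<Rightarrow> bool" where
  "is_CS (CS _ _) = True" | "is_CS _ = False"

fun is_StarG :: "rule \<Rightarrow> bool" where
  "is_StarG (StarG _ _) = True" | "is_StarG _ = False"

inductive gprov :: "(sequent \<Rightarrow> fm \<Rightarrow> bool) \<Rightarrow> sequent \<Rightarrow> bool" for ok where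
  "rstep r s ps \<Longrightarrow> \<not> is_CS r \<Longrightarrow> (\<forall>a. r = Cut a \<longrightarrow> ok s a)
   \<Longrightarrow> (\<forall>q\<in>set ps. gprov ok q) \<Longrightarrow> gprov ok s"

text \<open>Finite trees; a Bud carries its sequent and the position of its companion.\<close>
datatype ctree = Bud sequent "nat list" | Nd sequent rule "ctree list"

fun root :: "ctree \<Rightarrow> sequent" where
  "root (Bud s _) = s" | "root (Nd s _ _) = s"

inductive at :: "ctree \<Rightarrow> nat list \<Rightarrow> ctree \<Rightarrow> bool" where
  "at t [] t"
| "i < length ts \<Longrightarrow> at (ts ! i) p u \<Longrightarrow> at (Nd s r ts) (i # p) u"

definition cwf :: "(sequent \<Rightarrow> fm \<Rightarrow> bool) \<Rightarrow> ctree \<Rightarrow> bool" where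
  "cwf ok t \<longleftrightarrow> (\<forall>p u. at t p u \<longrightarrow>
     (case u of
        Nd s r ts \<Rightarrow> rstep r s (map root ts) \<and> \<not> is_StarG r \<and> (\<forall>a. r = Cut a \<longrightarrow> ok s a)
      | Bud s c \<Rightarrow> (\<exists>r ts. at t c (Nd s r ts) \<and> ts \<noteq> [])))"

text \<open>Edge of the graph obtained by identifying buds with companions: from inner
node at p via premise i to q.\<close>
definition edge :: "ctree \<Rightarrow> nat list \<Rightarrow> nat \<Rightarrow> nat list \<Rightarrow> bool" where
  "edge t p i q \<longleftrightarrow> (\<exists>s r ts. at t p (Nd s r ts) \<and> i < length ts \<and>
     (case ts ! i of Nd _ _ _ \<Rightarrow> q = p @ [i] | Bud _ c \<Rightarrow> q = c))"

text \<open>Trace relation: trace formula tau in the conclusion's succedent, tau' in the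
succedent of premise i.\<close>
fun tr :: "rule \<Rightarrow> nat \<Rightarrow> fm \<Rightarrow> fm \<Rightarrow> bool" where
  "tr (ImpR a b) i t t' = (t' = t \<or> (t = Imp a b \<and> t' = b))"
| "tr (SeqR p q a) i t t' = (t' = t \<or> (t = Box (Seq p q) a \<and> t' = Box p (Box q a)))"
| "tr (ChR p q a) i t t' = (t' = t \<or> (t = Box (Ch p q) a \<and> t' = (if i = 0 then Box p a else Box q a)))"
| "tr (TestR a b) i t t' = (t' = t \<or> (t = Box (Test a) b \<and> t' = b))"
| "tr (CS p a) i t t' = (t' = t \<or>
      (t = Box (Star p) a \<and> t' = (if i = 0 then a else Box p (Box (Star p) a))))"
| "tr (BoxR p a) i t t' = (t = Box p a \<and> t' = a)"
| "tr (BoxCR p a) i t t' = (t = BoxC p a \<and> t' = a)"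
| "tr _ i t t' = (t' = t)"

fun prog :: "rule \<Rightarrow> nat \<Rightarrow> fm \<Rightarrow> fm \<Rightarrow> bool" where
  "prog (CS p a) i t t' = (i = 1 \<and> t = Box (Star p) a \<and> t' = Box p (Box (Star p) a))"
| "prog _ i t t' = False"

definition trace_ok :: "ctree \<Rightarrow> bool" where
  "trace_ok t \<longleftrightarrow> (\<forall>ps is. (\<forall>k. edge t (ps k) (is k) (ps (Suc k))) \<longrightarrow>
     (\<exists>n \<tau>. (\<forall>k\<ge>n. \<exists>s r ts. at t (ps k) (Nd s r ts) \<and> \<tau> k \<in> snd s \<and> tr r (is k) (\<tau> k) (\<tau> (Suc k)))
          \<and> infinite {k. k \<ge> n \<and> (\<exists>s r ts. at t (ps k) (Nd s r ts) \<and> prog r (is k) (\<tau> k) (\<tau> (Suc k)))}))"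

definition cprov :: "(sequent \<Rightarrow> fm \<Rightarrow> bool) \<Rightarrow> sequent \<Rightarrow> bool" where
  "cprov ok s \<longleftrightarrow> (\<exists>t. root t = s \<and> cwf ok t \<and> trace_ok t)"

fun fl :: "fm \<Rightarrow> fm set" and flb :: "pg \<Rightarrow> fm \<Rightarrow> fm set" and flbc :: "pg \<Rightarrow> fm \<Rightarrow> fm set" where
  "fl Bot = {Bot}"
| "fl (Pr n) = {Pr n}"
| "fl (Imp a b) = insert (Imp a b) (fl a \<union> fl b)"
| "fl (Box p a) = flb p a \<union> fl a"
| "fl (BoxC p a) = flbc p a \<union> fl a"
| "flb (At n) a = {Box (At n) a}"
| "flb (Seq p q) a = insert (Box (Seq p q) a) (flb p (Box q a) \<union> flb q a)"
| "flb (Ch p q) a = insert (Box (Ch p q) a) (flb p a \<union> flb q a)"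
| "flb (Star p) a = insert (Box (Star p) a) (flb p (Box (Star p) a))"
| "flb (Test b) a = insert (Box (Test b) a) (fl b)"
| "flbc (At n) a = {BoxC (At n) a}"
| "flbc (Seq p q) a = insert (BoxC (Seq p q) a) (flbc q (BoxC p a) \<union> flbc p a)"
| "flbc (Ch p q) a = insert (BoxC (Ch p q) a) (flbc p a \<union> flbc q a)"
| "flbc (Star p) a = insert (BoxC (Star p) a) (flbc p (BoxC (Star p) a))"
| "flbc (Test b) a = insert (BoxC (Test b) a) (fl b)"

definition FL :: "fm set \<Rightarrow> fm set" where
  "FL L = (\<Union>a\<in>L. fl a)"

definition no_cut :: "sequent \<Rightarrow> fm \<Rightarrow> bool" where "no_cut s a \<longleftrightarrow> False"
definition any_cut :: "sequent \<Rightarrow> fm \<Rightarrow> bool" where "any_cut s a \<longleftrightarrow> True"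
definition fl_cut :: "sequent \<Rightarrow> fm \<Rightarrow> bool" where
  "fl_cut s a \<longleftrightarrow> a \<in> FL (fst s \<union> snd s)"

end

theory Submission
  imports Defs
begin

primrec sat :: "(nat \<Rightarrow> nat \<Rightarrow> nat \<Rightarrow> bool) \<Rightarrow> (nat \<Rightarrow> nat \<Rightarrow> bool) \<Rightarrow> fm \<Rightarrow> nat \<Rightarrow> bool"
and prel :: "(nat \<Rightarrow> nat \<Rightarrow> nat \<Rightarrow> bool) \<Rightarrow> (nat \<Rightarrow> nat \<Rightarrow> bool) \<Rightarrow> pg \<Rightarrow> nat \<Rightarrow> nat \<Rightarrow> bool" where
  "sat R V Bot x = False"
| "sat R V (Pr n) x = V n x"
| "sat R V (Imp a b) x = (sat R V a x \<longrightarrow> sat R V b x)"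
| "sat R V (Box p a) x = (\<forall>y. prel R V p x y \<longrightarrow> sat R V a y)"
| "sat R V (BoxC p a) x = (\<forall>y. prel R V p y x \<longrightarrow> sat R V a y)"
| "prel R V (At n) x y = R n x y"
| "prel R V (Seq p q) x y = (\<exists>z. prel R V p x z \<and> prel R V q z y)"
| "prel R V (Ch p q) x y = (prel R V p x y \<or> prel R V q x y)"
| "prel R V (Star p) x y = (prel R V p)\<^sup>*\<^sup>* x y"
| "prel R V (Test a) x y = (x = y \<and> sat R V a x)"

definition refm :: "(nat \<Rightarrow> nat \<Rightarrow> nat \<Rightarrow> bool) \<Rightarrow> (nat \<Rightarrow> nat \<Rightarrow> bool) \<Rightarrow> nat \<Rightarrow> sequent \<Rightarrow> bool" where
  "refm R V x s \<longleftrightarrow> (\<forall>g\<in>fst s. sat R V g x) \<and> (\<forall>d\<in>snd s. \<not> sat R V d x)"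

lemma std_sound:
  assumes "step r s ps" "refm R V x s"
  shows "\<exists>q\<in>set ps. \<exists>y. refm R V y q"
  using assms
proof (cases rule: step.cases)
  case (starG p a G)
  show ?thesis
  proof (rule ccontr)
    assume nq: "\<not> ?thesis"
    have ind: "\<And>y. sat R V a y \<Longrightarrow> (\<forall>g\<in>G. sat R V g y) \<Longrightarrow> sat R V (Box p a) y"
      using nq starG by (auto simp: refm_def)
    have "(prel R V p)\<^sup>*\<^sup>* x y \<Longrightarrow> sat R V a y" for y
    proof (induction rule: rtranclp_induct)
      case base then show ?case using starG assms(2) by (auto simp: refm_def)
    next
      case (step y z)
      have "\<forall>g\<in>G. sat R V g y" using step(1) starG assms(2) by (auto simp: refm_def)
      then show ?case using ind[OF step(3)] step(2) by auto
    qed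
    then show False using starG assms(2) by (auto simp: refm_def)
  qed
next
  case (cs p a G D)
  then obtain y where y: "(prel R V p)\<^sup>*\<^sup>* x y" "\<not> sat R V a y" using assms(2) by (auto simp: refm_def)
  show ?thesis
  proof (cases "x = y")
    case True then show ?thesis using cs y assms(2) by (auto simp: refm_def)
  next
    case False
    then obtain z where "prel R V p x z" "(prel R V p)\<^sup>*\<^sup>* z y" using y(1)
      by (metis converse_rtranclpE)
    then have "refm R V x (G, insert (Box p (Box (Star p) a)) D)"
      using cs y assms(2) by (auto simp: refm_def)
    then show ?thesis using cs by auto
  qed
next
  case (starL p a G D)
  then show ?thesis using assms(2) by (auto simp: refm_def intro: converse_rtranclp_into_rtranclp)
next
  case (box p a G D)
  then show ?thesis using assms(2) by (auto simp: refm_def)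
next
  case (boxc p a G D)
  then show ?thesis using assms(2) by (auto simp: refm_def)
qed (auto simp: refm_def; blast)+


abbreviation "al \<equiv> At 0"
abbreviation "pp \<equiv> Pr 0"
definition "R1 = (\<lambda>(n::nat) x y. y = Suc x)"
lemma prel_R1_al: "prel R1 V al = (\<lambda>x y. y = Suc x)"
  by (rule ext)+ (simp add: R1_def)

primrec sff :: "fm \<Rightarrow> bool" and sfp :: "pg \<Rightarrow> bool" where
  "sff Bot = True" | "sff (Pr n) = True" | "sff (Imp a b) = (sff a \<and> sff b)"
| "sff (Box p a) = (sfp p \<and> sff a)" | "sff (BoxC p a) = (sfp p \<and> sff a)"
| "sfp (At n) = True" | "sfp (Seq p q) = (sfp p \<and> sfp q)" | "sfp (Ch p q) = (sfp p \<and> sfp q)"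
| "sfp (Star p) = False" | "sfp (Test a) = sff a"

definition sfs :: "sequent \<Rightarrow> bool" where "sfs s \<longleftrightarrow> (\<forall>x\<in>fst s \<union> snd s. sff x)"

lemma sf_step: "step r s ps \<Longrightarrow> (\<forall>a. r \<noteq> Cut a) \<Longrightarrow> sfs s \<Longrightarrow> \<forall>q\<in>set ps. sfs q"
  by (cases rule: step.cases) (auto simp: sfs_def ball_Un)

lemma sf_notCS: "step r s ps \<Longrightarrow> sfs s \<Longrightarrow> \<not> is_CS r"
  by (cases rule: step.cases) (auto simp: sfs_def)

lemma prog_notCS: "\<not> is_CS r \<Longrightarrow> \<not> prog r i x y"
  by (cases r) auto

lemma at_nil: "at t [] u \<longleftrightarrow> u = t"
proof
  assume "at t [] u" then show "u = t" by (cases rule: at.cases) auto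
next
  assume "u = t" then show "at t [] u" by (simp add: at.intros(1))
qed
lemma at_Nd: "at (Nd s r ts) (i # p) u \<longleftrightarrow> i < length ts \<and> at (ts ! i) p u"
proof
  assume "at (Nd s r ts) (i # p) u" then show "i < length ts \<and> at (ts ! i) p u"
    by (cases rule: at.cases) auto
next
  assume "i < length ts \<and> at (ts ! i) p u" then show "at (Nd s r ts) (i # p) u"
    by (simp add: at.intros(2))
qed
lemma at_Bud: "at (Bud s c) (i # p) u \<longleftrightarrow> False"
  by (auto elim: at.cases)

lemma at_snoc: "at t p (Nd s r ts) \<Longrightarrow> i < length ts \<Longrightarrow> at t (p @ [i]) (ts ! i)"
proof (induction t p "Nd s r ts" rule: at.induct)
  case 1 then show ?case by (simp add: at_Nd at_nil)
next
  case (2 i ts' p s' r') then show ?case by (simp add: at_Nd)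
qed

lemma nodes_sf:
  assumes "at t p u"
    "\<forall>p s r ts. at t p (Nd s r ts) \<longrightarrow> step r s (map root ts) \<and> (\<forall>a. r \<noteq> Cut a)"
    "sfs (root t)"
  shows "sfs (root u)"
  using assms
proof (induction rule: at.induct)
  case (1 t) then show ?case by simp
next
  case (2 i ts p u s r)
  have h: "at (Nd s r ts) [] (Nd s r ts)" by (rule at.intros(1))
  have st: "step r s (map root ts) \<and> (\<forall>a. r \<noteq> Cut a)" using 2(4) h by blast
  have "\<forall>q\<in>set (map root ts). sfs q" using sf_step[of r s "map root ts"] st 2(5) by auto
  then have sfi: "sfs (root (ts ! i))" using 2(1) by simp
  have loc: "\<forall>p s r ts'. at (ts ! i) p (Nd s r ts') \<longrightarrow> step r s (map root ts') \<and> (\<forall>a. r \<noteq> Cut a)"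
  proof (intro allI impI)
    fix p' s' r' ts' assume "at (ts ! i) p' (Nd s' r' ts')"
    then have "at (Nd s r ts) (i # p') (Nd s' r' ts')" using 2(1) by (rule at.intros(2)[rotated])
    then show "step r' s' (map root ts') \<and> (\<forall>a. r' \<noteq> Cut a)" using 2(4) by blast
  qed
  show ?case using 2(3)[OF loc sfi] .
qed

lemma cyc_sound:
  assumes cwf: "cwf no_cut t" and tr: "trace_ok t" and sf: "sfs (root t)"
  and clos: "\<And>r s ps. step r s ps \<Longrightarrow> (\<forall>a. r \<noteq> Cut a) \<Longrightarrow> Q s \<Longrightarrow> \<exists>q\<in>set ps. Q q"
  shows "\<not> Q (root t)"
proof -
  have locN: "at t p (Nd s r ts) \<Longrightarrow> step r s (map root ts) \<and> (\<forall>a. r \<noteq> Cut a)" for p s r ts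
    using cwf unfolding cwf_def rstep_def no_cut_def by fastforce
  have locB: "at t p (Bud s c) \<Longrightarrow> \<exists>r ts. at t c (Nd s r ts)" for p s c
    using cwf unfolding cwf_def by fastforce
  have noCS: "at t p (Nd s r ts) \<Longrightarrow> \<not> is_CS r" for p s r ts
    using locN nodes_sf[OF _ _ sf] sf_notCS by (metis root.simps(2))
  have noinf: "\<not> (\<forall>k. edge t (ps k) (is k) (ps (Suc k)))" for ps "is"
  proof
    assume e: "\<forall>k. edge t (ps k) (is k) (ps (Suc k))"
    then obtain n \<tau> where inf: "infinite {k. k \<ge> n \<and> (\<exists>s r ts. at t (ps k) (Nd s r ts) \<and> prog r (is k) (\<tau> k) (\<tau> (Suc k)))}"
      using tr unfolding trace_ok_def by blast
    have "{k. k \<ge> n \<and> (\<exists>s r ts. at t (ps k) (Nd s r ts) \<and> prog r (is k) (\<tau> k) (\<tau> (Suc k)))} = {}"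
      using noCS prog_notCS by blast
    then show False using inf by (metis finite.emptyI)
  qed
  define Rel where "Rel = {(q, p). \<exists>i. edge t p i q}"
  have wf: "wf Rel"
  proof (rule ccontr)
    assume "\<not> wf Rel"
    then obtain f where f: "\<forall>k. (f (Suc k), f k) \<in> Rel" using wf_iff_no_infinite_down_chain by blast
    then have "\<forall>k. \<exists>i. edge t (f k) i (f (Suc k))" by (auto simp: Rel_def)
    then obtain g where "\<forall>k. edge t (f k) (g k) (f (Suc k))" by metis
    then show False using noinf by blast
  qed
  have main: "\<forall>s r ts. at t p (Nd s r ts) \<longrightarrow> \<not> Q s" for p
  proof (induction p rule: wf_induct[OF wf])
    case (1 p)
    show ?case
    proof (intro allI impI notI)
      fix s r ts assume atp: "at t p (Nd s r ts)" and Qs: "Q s"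
      from locN[OF atp] have st: "step r s (map root ts)" "\<forall>a. r \<noteq> Cut a" by auto
      from clos[OF st Qs] obtain i where i: "i < length ts" "Q (root (ts ! i))"
        by (auto simp: in_set_conv_nth)
      show False
      proof (cases "ts ! i")
        case (Bud s' c)
        have "at t (p @ [i]) (Bud s' c)" using at_snoc[OF atp i(1)] Bud by simp
        then obtain r' ts' where c: "at t c (Nd s' r' ts')" using locB by blast
        have "edge t p i c" unfolding edge_def using atp i(1) Bud
          by (intro exI[where x=s] exI[where x=r] exI[where x=ts]) simp
        then have "(c, p) \<in> Rel" by (auto simp: Rel_def)
        then have "\<not> Q s'" using 1 c by blast
        then show False using i(2) Bud by simp
      next
        case (Nd s' r' ts')
        have c: "at t (p @ [i]) (Nd s' r' ts')" using at_snoc[OF atp i(1)] Nd by simp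
        have "edge t p i (p @ [i])" unfolding edge_def using atp i(1) Nd
          by (intro exI[where x=s] exI[where x=r] exI[where x=ts]) simp
        then have "(p @ [i], p) \<in> Rel" by (auto simp: Rel_def)
        then have "\<not> Q s'" using 1 c by blast
        then show False using i(2) Nd by simp
      qed
    qed
  qed
  show ?thesis
  proof (cases t)
    case (Bud s c)
    then have "at t [] (Bud s c)" by (simp add: at.intros)
    then obtain r ts where "at t c (Nd s r ts)" using locB by blast
    then show ?thesis using Bud by (cases c) (auto simp: at_nil at_Bud)
  next
    case (Nd s r ts)
    have "at t [] (Nd s r ts)" using Nd by (simp add: at.intros(1))
    then have "\<not> Q s" using main[of "[]"] by blast
    then show ?thesis using Nd by simp
  qed
qed


fun okt :: "(sequent \<Rightarrow> fm \<Rightarrow> bool) \<Rightarrow> ctree \<Rightarrow> bool" where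
  "okt ok (Bud s c) = False"
| "okt ok (Nd s r ts) = (rstep r s (map root ts) \<and> \<not> is_StarG r \<and> \<not> is_CS r \<and>
      (\<forall>a. r = Cut a \<longrightarrow> ok s a) \<and> (\<forall>q\<in>set ts. okt ok q))"

fun height :: "ctree \<Rightarrow> nat" where
  "height (Bud s c) = 0"
| "height (Nd s r ts) = Suc (sum_list (map height ts))"

lemma at_height: "at t p u \<Longrightarrow> length p \<le> height t"
proof (induction rule: at.induct)
  case (1 t) then show ?case by simp
next
  case (2 i ts p u s r)
  have "height (ts ! i) \<le> sum_list (map height ts)"
    using 2(1) by (intro member_le_sum_list) auto
  then show ?case using 2 by simp
qed

lemma okt_at: "at t p u \<Longrightarrow> okt ok t \<Longrightarrow> okt ok u"
proof (induction rule: at.induct)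
  case (1 t) then show ?case by simp
next
  case (2 i ts p u s r) then show ?case by simp
qed

lemma okt_gprov: "okt ok t \<Longrightarrow> gprov ok (root t)"
proof (induction t)
  case (Bud s c) then show ?case by simp
next
  case (Nd s r ts)
  show ?case unfolding root.simps
  proof (rule gprov.intros[of r s "map root ts"])
    show "rstep r s (map root ts)" "\<not> is_CS r" "\<forall>a. r = Cut a \<longrightarrow> ok s a" using Nd(2) by auto
    show "\<forall>q\<in>set (map root ts). gprov ok q" using Nd by auto
  qed
qed

lemma okt_cwf: "okt ok t \<Longrightarrow> cwf ok t"
  unfolding cwf_def
proof (intro allI impI)
  fix p u assume "okt ok t" "at t p u"
  then have "okt ok u" using okt_at by blast
  then show "case u of Nd s r ts \<Rightarrow> rstep r s (map root ts) \<and> \<not> is_StarG r \<and> (\<forall>a. r = Cut a \<longrightarrow> ok s a)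
      | Bud s c \<Rightarrow> (\<exists>r ts. at t c (Nd s r ts) \<and> ts \<noteq> [])"
    by (cases u) auto
qed

lemma okt_trace: assumes "okt ok t" shows "trace_ok t"
  unfolding trace_ok_def
proof (intro allI impI)
  fix ps "is" assume e: "\<forall>k. edge t (ps k) (is k) (ps (Suc k))"
  have step: "length (ps (Suc k)) = Suc (length (ps k))" for k
  proof -
    from e obtain s r ts where a: "at t (ps k) (Nd s r ts)" "is k < length ts"
      "case ts ! is k of Nd _ _ _ \<Rightarrow> ps (Suc k) = ps k @ [is k] | Bud _ c \<Rightarrow> ps (Suc k) = c"
      unfolding edge_def by blast
    have "okt ok (Nd s r ts)" using okt_at[OF a(1) assms] .
    then have "okt ok (ts ! is k)" using a(2) by simp
    then show ?thesis using a(3) by (cases "ts ! is k") auto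
  qed
  have len: "length (ps k) \<ge> k" for k
    by (induction k) (auto simp: step)
  define k where "k = Suc (height t)"
  from e obtain s r ts where "at t (ps k) (Nd s r ts)" unfolding edge_def by blast
  then have "length (ps k) \<le> height t" by (rule at_height)
  then show "\<exists>n \<tau>. (\<forall>k\<ge>n. \<exists>s r ts. at t (ps k) (Nd s r ts) \<and> \<tau> k \<in> snd s \<and> tr r (is k) (\<tau> k) (\<tau> (Suc k))) \<and>
        infinite {k. n \<le> k \<and> (\<exists>s r ts. at t (ps k) (Nd s r ts) \<and> prog r (is k) (\<tau> k) (\<tau> (Suc k)))}"
    using len[of k] by (simp add: k_def)
qed


abbreviation "np \<equiv> Imp pp Bot"
abbreviation "fY \<equiv> BoxC al np"
abbreviation "fX \<equiv> Imp fY Bot"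
abbreviation "fZ \<equiv> BoxC al (Box al fX)"
definition "T2 = ({pp}, {Box al fX})"
definition "V2 = (\<lambda>(n::nat) (x::nat). False)"

definition ref2 :: "sequent \<Rightarrow> bool" where
  "ref2 q \<longleftrightarrow> (fst q \<subseteq> {pp} \<and> snd q \<subseteq> {Box al fX}) \<or> (fst q \<subseteq> {fY} \<and> snd q \<subseteq> {fX, Bot, fZ})
     \<or> (\<exists>R V x. refm R V x q)"

lemma sat1: "\<not> sat R1 V2 fX 1" by (simp add: prel_R1_al V2_def)
lemma sat0: "\<not> sat R1 V2 (Box al fX) 0" by (simp add: prel_R1_al V2_def)
lemma satZ: "\<not> sat R1 V2 fZ 1" using sat0 by (simp add: prel_R1_al)

lemma clos_w:
  assumes "step r s ps" "\<forall>a. r \<noteq> Cut a" "fst s \<subseteq> {pp}" "snd s \<subseteq> {Box al fX}"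
  shows "\<exists>q\<in>set ps. ref2 q"
  using assms
proof (cases rule: step.cases)
  case (box p a G D)
  have G: "G = {}" using box assms by auto
  have pa: "p = al" "a = fX" using box assms by auto
  have "ref2 (G, insert a (BoxC p ` D))" using G pa box assms by (auto simp: ref2_def)
  then show ?thesis using box by simp
next
  case (wk G G' D D') then show ?thesis using assms by (auto simp: ref2_def)
next
  case (ax G D) then show ?thesis using assms by auto
qed (use assms in auto)

lemma clos_v:
  assumes "step r s ps" "\<forall>a. r \<noteq> Cut a" "fst s \<subseteq> {fY}" "snd s \<subseteq> {fX, Bot, fZ}"
  shows "\<exists>q\<in>set ps. ref2 q"
  using assms
proof (cases rule: step.cases)
  case (impR a b G D)
  have ab: "a = fY" "b = Bot" using impR assms by auto
  have "ref2 (insert a G, insert b D)" using ab impR assms by (auto simp: ref2_def)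
  then show ?thesis using impR by simp
next
  case (boxc p a G D)
  have pa: "p = al" "a = Box al fX" using boxc assms by auto
  have G: "G \<subseteq> {np}" using boxc assms pa by auto
  have D: "D \<subseteq> {fX, Bot, fZ}" using boxc assms by auto
  have "\<forall>d\<in>D. \<not> sat R1 V2 (Box al d) 0"
  proof
    fix d assume "d \<in> D"
    then have "\<not> sat R1 V2 d 1" using D sat1 satZ by (auto simp del: sat.simps simp: sat.simps(1))
    then show "\<not> sat R1 V2 (Box al d) 0" by (simp add: prel_R1_al)
  qed
  then have "refm R1 V2 0 (G, insert a (Box p ` D))"
    using G pa sat0 by (auto simp: refm_def V2_def)
  then have "ref2 (G, insert a (Box p ` D))" by (auto simp: ref2_def)
  then show ?thesis using boxc by simp
next
  case (wk G G' D D') then show ?thesis using assms by (auto simp: ref2_def)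
next
  case (ax G D) then show ?thesis using assms by auto
qed (use assms in auto)

lemma clos2: "step r s ps \<Longrightarrow> (\<forall>a. r \<noteq> Cut a) \<Longrightarrow> ref2 s \<Longrightarrow> \<exists>q\<in>set ps. ref2 q"
  unfolding ref2_def[of s]
  using clos_w clos_v std_sound by (metis ref2_def)

lemma gprov2: "gprov ok s \<Longrightarrow> (\<And>s a. \<not> ok s a) \<Longrightarrow> \<not> ref2 s"
proof (induction rule: gprov.induct)
  case (1 r s ps)
  have "\<forall>a. r \<noteq> Cut a" using 1 by blast
  then show ?case using clos2[of r s ps] 1 by (auto simp: rstep_def)
qed

lemma ref2T2: "ref2 T2" by (simp add: ref2_def T2_def)

lemma not_gprov2: "\<not> gprov no_cut T2"
  using gprov2[of no_cut T2] ref2T2 by (auto simp: no_cut_def)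

lemma not_cprov2: "\<not> cprov no_cut T2"
proof
  assume "cprov no_cut T2"
  then obtain t where t: "root t = T2" "cwf no_cut t" "trace_ok t" by (auto simp: cprov_def)
  have "sfs (root t)" using t(1) by (simp add: T2_def sfs_def)
  then have "\<not> ref2 (root t)" using cyc_sound[OF t(2) t(3)] clos2 by blast
  then show False using t(1) ref2T2 by simp
qed

definition "t2 = Nd ({pp},{Box al fX}) (Cut np)
  [Nd ({pp},{np, Box al fX}) Wk [Nd ({},{Box al fX, np}) (BoxR al fX)
      [Nd ({},{fX,fY}) (ImpR fY Bot) [Nd ({fY},{Bot,fY}) RAx []]]],
   Nd ({np,pp},{Box al fX}) (ImpL pp Bot) [Nd ({pp},{pp, Box al fX}) RAx [], Nd ({Bot,pp},{Box al fX}) RBot []]]"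

lemma okt2: "okt any_cut t2"
proof -
  have s1: "step RAx ({fY},{Bot,fY}) []" by (rule step.ax) simp
  have s2: "step (ImpR fY Bot) ({},{fX,fY}) [({fY},{Bot,fY})]"
    using step.impR[of fY Bot "{}" "{fY}"] by simp
  have s3: "step (BoxR al fX) ({},{Box al fX, np}) [({},{fX,fY})]"
    using step.box[of al fX "{}" "{np}"] by simp
  have s4: "step Wk ({pp},{np, Box al fX}) [({},{Box al fX, np})]"
    by (rule step.wk) auto
  have s5: "step RAx ({pp},{pp, Box al fX}) []" by (rule step.ax) simp
  have s6: "step RBot ({Bot,pp},{Box al fX}) []" by (rule step.bot) simp
  have s7: "step (ImpL pp Bot) ({np,pp},{Box al fX}) [({pp},{pp, Box al fX}), ({Bot,pp},{Box al fX})]"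
    using step.impL[of pp Bot "{pp}" "{Box al fX}"] by simp
  have s8: "step (Cut np) ({pp},{Box al fX}) [({pp},{np, Box al fX}), ({np,pp},{Box al fX})]"
    using step.cut[of np "{pp}" "{Box al fX}"] by simp
  show ?thesis unfolding t2_def using s1 s2 s3 s4 s5 s6 s7 s8
    by (simp add: rstep_def fin_seq_def any_cut_def)
qed

lemma T2_pos: "gprov any_cut T2 \<and> cprov any_cut T2"
proof -
  have r: "root t2 = T2" by (simp add: t2_def T2_def)
  show ?thesis using okt_gprov[OF okt2] okt_cwf[OF okt2] okt_trace[OF okt2] r
    by (auto simp: cprov_def)
qed


abbreviation "fA \<equiv> Box al (Box (Star al) pp)"
abbreviation "fB \<equiv> Box (Star al) (Box al pp)"
definition "G0 = {fA, Box al pp, Box al fB}"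
definition "D0 = {fB, pp, Box (Star al) pp}"
definition "V1 = (\<lambda>(n::nat) (x::nat). x = 1)"

lemma succ_rtc: "(\<lambda>x y. y = Suc x)\<^sup>*\<^sup>* x y \<longleftrightarrow> x \<le> y"
proof
  assume "(\<lambda>x y. y = Suc x)\<^sup>*\<^sup>* x y" then show "x \<le> y" by induction auto
next
  assume "x \<le> y" then show "(\<lambda>x y. y = Suc x)\<^sup>*\<^sup>* x y"
  proof (induction rule: dec_induct)
    case base then show ?case by simp
  next
    case (step n) then show ?case by (simp add: rtranclp.rtrancl_into_rtrancl)
  qed
qed

lemma prel_R1_star: "prel R1 V (Star al) x y \<longleftrightarrow> x \<le> y"
  by (simp add: prel_R1_al succ_rtc)

definition ref1 :: "sequent \<Rightarrow> bool" where
  "ref1 q \<longleftrightarrow> (fst q \<subseteq> G0 \<and> snd q \<subseteq> D0) \<or> (\<exists>R V x. refm R V x q)"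

lemma FL_w0: "FL (G0 \<union> D0) = G0 \<union> D0"
  by (auto simp: FL_def G0_def D0_def)

lemma w2': "d \<in> D0 \<Longrightarrow> \<not> sat R1 V1 d 2"
  by (auto simp: D0_def prel_R1_al succ_rtc V1_def intro!: exI[of _ 2])

lemma w2: "d \<in> D0 \<Longrightarrow> \<not> sat R1 V1 (BoxC (Star al) d) 2"
  using w2'[of d] by (auto simp: prel_R1_star)

lemma G0_shape: "x \<in> G0 \<Longrightarrow> \<exists>a. x = Box al a"
  by (auto simp: G0_def)
lemma D0_shape: "x \<in> D0 \<Longrightarrow> x = pp \<or> (\<exists>a. x = Box (Star al) a)"
  by (auto simp: D0_def)
lemma G0D0: "G0 \<inter> D0 = {}" by (auto simp: G0_def D0_def)

lemma w0_closed:
  assumes "step r s ps" "\<not> is_CS r" "\<forall>a. r = Cut a \<longrightarrow> a \<in> FL (fst s \<union> snd s)"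
    "fst s \<subseteq> G0" "snd s \<subseteq> D0"
  shows "\<exists>q\<in>set ps. ref1 q"
  using assms
proof (cases rule: step.cases)
  case (cut a G D)
  have "a \<in> FL (G \<union> D)" "G \<union> D \<subseteq> G0 \<union> D0" using cut assms by auto
  then have "a \<in> FL (G0 \<union> D0)" unfolding FL_def by blast
  then have "a \<in> G0 \<or> a \<in> D0" using FL_w0 by auto
  then show ?thesis using cut assms by (auto simp: ref1_def)
next
  case (box p a G D)
  have pa: "Box p a \<in> D0" using box assms by auto
  then have p: "p = Star al" and a: "a = Box al pp \<or> a = pp" by (auto simp: D0_def)
  have G: "G = {}"
  proof (rule ccontr)
    assume "G \<noteq> {}" then obtain g where "g \<in> G" by auto
    then have "Box p g \<in> G0" using box assms by auto
    then show False using p G0_shape by blast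
  qed
  have "refm R1 V1 2 (G, insert a (BoxC p ` D))"
    using G a p w2 box assms by (auto simp: refm_def R1_def V1_def)
  then show ?thesis using box by (auto simp: ref1_def)
next
  case (starG p a G)
  have "Box (Star p) a \<in> D0" "a \<in> G0" using starG assms by auto
  then have p: "p = al" and a: "a = Box al pp" by (auto simp: D0_def G0_def)
  have G: "G = {}"
  proof (rule ccontr)
    assume "G \<noteq> {}" then obtain g where "g \<in> G" by auto
    then have "Box (Star p) g \<in> G0" using starG assms by auto
    then show False using G0_shape by blast
  qed
  have "refm R1 V1 0 (insert a G, {Box p a})"
    using G a p by (auto simp: refm_def R1_def V1_def)
  then show ?thesis using starG by (auto simp: ref1_def)
next
  case (ax G D) then show ?thesis using assms G0D0 by auto
next
  case (bot G D) then show ?thesis using assms G0_shape by force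
next
  case (impL a b G D) then show ?thesis using assms G0_shape by force
next
  case (impR a b G D) then show ?thesis using assms D0_shape by force
next
  case (wk G G' D D') then show ?thesis using assms by (auto simp: ref1_def)
next
  case (boxc p a G D) then show ?thesis using assms D0_shape by force
next
  case (seqL p q a G D) then show ?thesis using assms G0_shape by force
next
  case (seqR p q a G D) then show ?thesis using assms D0_shape by force
next
  case (chL p q a G D) then show ?thesis using assms G0_shape by force
next
  case (chR p q a G D) then show ?thesis using assms D0_shape by force
next
  case (starL p a G D) then show ?thesis using assms G0_shape by force
next
  case (testL a b G D) then show ?thesis using assms G0_shape by force
next
  case (testR a b G D) then show ?thesis using assms D0_shape by force
next
  case (cs p a G D) then show ?thesis using assms by auto
qed

lemma gprov_fl:
  assumes "gprov ok s" "\<And>s a. ok s a \<Longrightarrow> fl_cut s a"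
  shows "\<not> ref1 s"
  using assms(1)
proof induction
  case (1 r s ps)
  have st: "step r s ps" using 1 by (simp add: rstep_def)
  show ?case
  proof
    assume "ref1 s"
    then consider "fst s \<subseteq> G0 \<and> snd s \<subseteq> D0" | R V x where "refm R V x s" by (auto simp: ref1_def)
    then show False
    proof cases
      case 1
      have "\<forall>a. r = Cut a \<longrightarrow> a \<in> FL (fst s \<union> snd s)" using \<open>\<forall>a. r = Cut a \<longrightarrow> ok s a\<close> assms(2)
        by (auto simp: fl_cut_def)
      then show False using w0_closed[OF st \<open>\<not> is_CS r\<close>] 1 \<open>\<forall>q\<in>set ps. gprov ok q \<and> \<not> ref1 q\<close> by blast
    next
      case 2
      then show False using std_sound[OF st] \<open>\<forall>q\<in>set ps. gprov ok q \<and> \<not> ref1 q\<close> by (auto simp: ref1_def)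
    qed
  qed
qed

lemma not_gprov1: "\<not> gprov fl_cut ({fA}, {fB})"
  using gprov_fl[of fl_cut "({fA}, {fB})"] by (auto simp: ref1_def G0_def D0_def)

lemma not_gprov1': "\<not> gprov no_cut ({fA}, {fB})"
  using gprov_fl[of no_cut "({fA}, {fB})"] by (auto simp: ref1_def G0_def D0_def no_cut_def)


definition "L0 = Nd ({pp, fA},{pp}) RAx []"
definition "K0 = Nd ({Box (Star al) pp},{pp}) (StarL al pp) [L0]"
definition "N1 = Nd ({fA},{Box al pp}) (BoxR al pp) [K0]"
definition "BB = Bud ({fA},{fB}) []"
definition "W2 = Nd ({pp,fA},{fB}) Wk [BB]"
definition "K2 = Nd ({Box (Star al) pp},{fB}) (StarL al pp) [W2]"
definition "N2 = Nd ({fA},{Box al fB}) (BoxR al fB) [K2]"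
definition "t1 = Nd ({fA},{fB}) (CS al (Box al pp)) [N1, N2]"

lemma at_Nd0: "at (Nd s r []) p u \<longleftrightarrow> p = [] \<and> u = Nd s r []"
  by (cases p) (auto simp: at_nil at_Nd)
lemma at_Nd1: "at (Nd s r [c]) p u \<longleftrightarrow> (p = [] \<and> u = Nd s r [c]) \<or> (\<exists>p'. p = 0 # p' \<and> at c p' u)"
  by (cases p) (auto simp: at_nil at_Nd)
lemma at_Nd2: "at (Nd s r [c, d]) p u \<longleftrightarrow> (p = [] \<and> u = Nd s r [c, d]) \<or> (\<exists>p'. p = 0 # p' \<and> at c p' u)
   \<or> (\<exists>p'. p = 1 # p' \<and> at d p' u)"
  by (cases p) (auto simp: at_nil at_Nd less_Suc_eq)
lemma at_Bud_iff: "at (Bud s c) p u \<longleftrightarrow> (p = [] \<and> u = Bud s c)"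
  by (cases p) (auto simp: at_nil at_Bud)

lemma atL0: "at L0 p u \<longleftrightarrow> p = [] \<and> u = L0" by (simp only: L0_def at_Nd0)
lemma atK0: "at K0 p u \<longleftrightarrow> (p = [] \<and> u = K0) \<or> (\<exists>p'. p = 0 # p' \<and> at L0 p' u)" by (simp only: K0_def at_Nd1)
lemma atN1: "at N1 p u \<longleftrightarrow> (p = [] \<and> u = N1) \<or> (\<exists>p'. p = 0 # p' \<and> at K0 p' u)" by (simp only: N1_def at_Nd1)
lemma atBB: "at BB p u \<longleftrightarrow> p = [] \<and> u = BB" by (simp only: BB_def at_Bud_iff)
lemma atW2: "at W2 p u \<longleftrightarrow> (p = [] \<and> u = W2) \<or> (\<exists>p'. p = 0 # p' \<and> at BB p' u)" by (simp only: W2_def at_Nd1)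
lemma atK2: "at K2 p u \<longleftrightarrow> (p = [] \<and> u = K2) \<or> (\<exists>p'. p = 0 # p' \<and> at W2 p' u)" by (simp only: K2_def at_Nd1)
lemma atN2: "at N2 p u \<longleftrightarrow> (p = [] \<and> u = N2) \<or> (\<exists>p'. p = 0 # p' \<and> at K2 p' u)" by (simp only: N2_def at_Nd1)
lemma att1: "at t1 p u \<longleftrightarrow> (p = [] \<and> u = t1) \<or> (\<exists>p'. p = 0 # p' \<and> at N1 p' u) \<or> (\<exists>p'. p = 1 # p' \<and> at N2 p' u)"
  by (simp only: t1_def at_Nd2)

lemma at_t1: "at t1 p u \<longleftrightarrow> (p = [] \<and> u = t1) \<or> (p = [0] \<and> u = N1) \<or> (p = [1] \<and> u = N2)
  \<or> (p = [0,0] \<and> u = K0) \<or> (p = [0,0,0] \<and> u = L0) \<or> (p = [1,0] \<and> u = K2)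
  \<or> (p = [1,0,0] \<and> u = W2) \<or> (p = [1,0,0,0] \<and> u = BB)"
  unfolding att1 atN1 atN2 atK0 atK2 atL0 atW2 atBB by auto


lemmas tdefs = t1_def N1_def N2_def K0_def K2_def L0_def W2_def BB_def

lemma edge_t1:
  assumes "edge t1 p i q"
  shows "(p = [] \<and> i = 0 \<and> q = [0]) \<or> (p = [] \<and> i = 1 \<and> q = [1])
  \<or> (p = [0] \<and> i = 0 \<and> q = [0,0]) \<or> (p = [0,0] \<and> i = 0 \<and> q = [0,0,0])
  \<or> (p = [1] \<and> i = 0 \<and> q = [1,0]) \<or> (p = [1,0] \<and> i = 0 \<and> q = [1,0,0])
  \<or> (p = [1,0,0] \<and> i = 0 \<and> q = [])"
proof -
  obtain s r ts where a: "at t1 p (Nd s r ts)" "i < length ts"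
    "case ts ! i of Nd _ _ _ \<Rightarrow> q = p @ [i] | Bud _ c \<Rightarrow> q = c"
    using assms unfolding edge_def by blast
  have "BB \<noteq> Nd s r ts" by (simp add: BB_def)
  then have "(p = [] \<and> Nd s r ts = t1) \<or> (p = [0] \<and> Nd s r ts = N1) \<or> (p = [1] \<and> Nd s r ts = N2)
    \<or> (p = [0,0] \<and> Nd s r ts = K0) \<or> (p = [0,0,0] \<and> Nd s r ts = L0) \<or> (p = [1,0] \<and> Nd s r ts = K2)
    \<or> (p = [1,0,0] \<and> Nd s r ts = W2)" using a(1) unfolding at_t1 by metis
  then show ?thesis
  proof (elim disjE conjE)
    assume "p = []" "Nd s r ts = t1"
    then have "ts = [N1, N2]" by (simp add: t1_def)
    then show ?thesis using a(2,3) \<open>p = []\<close> by (cases i) (auto simp: N1_def N2_def)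
  next
    assume "p = [0]" "Nd s r ts = N1"
    then have "ts = [K0]" by (simp add: N1_def)
    then show ?thesis using a(2,3) \<open>p = [0]\<close> by (simp add: K0_def)
  next
    assume "p = [1]" "Nd s r ts = N2"
    then have "ts = [K2]" by (simp add: N2_def)
    then show ?thesis using a(2,3) \<open>p = [1]\<close> by (simp add: K2_def)
  next
    assume "p = [0,0]" "Nd s r ts = K0"
    then have "ts = [L0]" by (simp add: K0_def)
    then show ?thesis using a(2,3) \<open>p = [0,0]\<close> by (simp add: L0_def)
  next
    assume "p = [0,0,0]" "Nd s r ts = L0"
    then have "ts = []" by (simp add: L0_def)
    then show ?thesis using a(2) by simp
  next
    assume "p = [1,0]" "Nd s r ts = K2"
    then have "ts = [W2]" by (simp add: K2_def)
    then show ?thesis using a(2,3) \<open>p = [1,0]\<close> by (simp add: W2_def)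
  next
    assume "p = [1,0,0]" "Nd s r ts = W2"
    then have "ts = [BB]" by (simp add: W2_def)
    then show ?thesis using a(2,3) \<open>p = [1,0,0]\<close> by (simp add: BB_def)
  qed
qed

lemma fin: "fin_seq (G, D) \<longleftrightarrow> finite G \<and> finite D" by (simp add: fin_seq_def)

lemma cwf_t1: "cwf no_cut t1"
proof -
  have s1: "step (CS al (Box al pp)) ({fA},{fB}) [({fA},{Box al pp}), ({fA},{Box al fB})]"
    using step.cs[of al "Box al pp" "{fA}" "{}"] by simp
  have s2: "step (BoxR al pp) ({fA},{Box al pp}) [({Box (Star al) pp},{pp})]"
    using step.box[of al pp "{Box (Star al) pp}" "{}"] by simp
  have s3: "step (StarL al pp) ({Box (Star al) pp},{pp}) [({pp, fA},{pp})]"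
    using step.starL[of al pp "{}" "{pp}"] by simp
  have s4: "step RAx ({pp, fA},{pp}) []" by (rule step.ax) simp
  have s5: "step (BoxR al fB) ({fA},{Box al fB}) [({Box (Star al) pp},{fB})]"
    using step.box[of al fB "{Box (Star al) pp}" "{}"] by simp
  have s6: "step (StarL al pp) ({Box (Star al) pp},{fB}) [({pp, fA},{fB})]"
    using step.starL[of al pp "{}" "{fB}"] by simp
  have s7: "step Wk ({pp, fA},{fB}) [({fA},{fB})]" by (rule step.wk) auto
  have f: "\<And>G D. finite G \<Longrightarrow> finite D \<Longrightarrow> fin_seq (G, D)" by (simp add: fin)
  have r0: "at t1 [] t1" by (simp add: at_nil)
  show ?thesis unfolding cwf_def
  proof (intro allI impI)
    fix p u assume "at t1 p u"
    then have "u = t1 \<or> u = N1 \<or> u = N2 \<or> u = K0 \<or> u = L0 \<or> u = K2 \<or> u = W2 \<or> u = BB"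
      unfolding at_t1 by blast
    then show "case u of Nd s r ts \<Rightarrow> rstep r s (map root ts) \<and> \<not> is_StarG r \<and> (\<forall>a. r = Cut a \<longrightarrow> no_cut s a)
      | Bud s c \<Rightarrow> (\<exists>r ts. at t1 c (Nd s r ts) \<and> ts \<noteq> [])"
    proof (elim disjE)
      assume "u = t1" then show ?thesis using s1 by (simp add: t1_def N1_def N2_def rstep_def f)
    next
      assume "u = N1" then show ?thesis using s2 by (simp add: N1_def K0_def rstep_def f)
    next
      assume "u = N2" then show ?thesis using s5 by (simp add: N2_def K2_def rstep_def f)
    next
      assume "u = K0" then show ?thesis using s3 by (simp add: K0_def L0_def rstep_def f)
    next
      assume "u = L0" then show ?thesis using s4 by (simp add: L0_def rstep_def f)
    next
      assume "u = K2" then show ?thesis using s6 by (simp add: K2_def W2_def rstep_def f)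
    next
      assume "u = W2" then show ?thesis using s7 by (simp add: W2_def BB_def rstep_def f)
    next
      assume "u = BB" then show ?thesis using r0 by (simp add: BB_def) (metis t1_def list.distinct(1))
    qed
  qed
qed


lemma unb_inf: "(\<forall>m. \<exists>n\<ge>m. n \<in> (S::nat set)) \<Longrightarrow> infinite S"
  using finite_nat_set_iff_bounded_le by (metis not_less_eq_eq)

lemma trace_t1: "trace_ok t1"
  unfolding trace_ok_def
proof (intro allI impI)
  fix ps "is" assume e: "\<forall>k. edge t1 (ps k) (is k) (ps (Suc k))"
  note E = edge_t1[OF e[rule_format]]
  have inC: "ps k = [] \<or> ps k = [1] \<or> ps k = [1,0] \<or> ps k = [1,0,0]" for k
  proof -
    have n3: "ps j \<noteq> [0,0,0]" for j using E[of j] by auto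
    have n2: "ps j \<noteq> [0,0]" for j using E[of j] n3[of "Suc j"] by auto
    have n1: "ps j \<noteq> [0]" for j using E[of j] n2[of "Suc j"] by auto
    show ?thesis using E[of k] n1 n2 n3 by blast
  qed
  have t0: "ps k = [] \<Longrightarrow> is k = 1 \<and> ps (Suc k) = [1]" for k using E[of k] inC[of "Suc k"] by auto
  have t1': "ps k = [1] \<Longrightarrow> is k = 0 \<and> ps (Suc k) = [1,0]" for k using E[of k] by auto
  have t2: "ps k = [1,0] \<Longrightarrow> is k = 0 \<and> ps (Suc k) = [1,0,0]" for k using E[of k] by auto
  have t3: "ps k = [1,0,0] \<Longrightarrow> is k = 0 \<and> ps (Suc k) = []" for k using E[of k] by auto
  define \<tau> where "\<tau> k = (if ps k = [1] then Box al fB else fB)" for k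
  have at0: "at t1 [] (Nd ({fA},{fB}) (CS al (Box al pp)) [N1, N2])" by (simp add: at_nil t1_def)
  have at1: "at t1 [1] (Nd ({fA},{Box al fB}) (BoxR al fB) [K2])" by (simp add: at_t1 N2_def)
  have at2: "at t1 [1,0] (Nd ({Box (Star al) pp},{fB}) (StarL al pp) [W2])" by (simp add: at_t1 K2_def)
  have at3: "at t1 [1,0,0] (Nd ({pp,fA},{fB}) Wk [BB])" by (simp add: at_t1 W2_def)
  have A: "\<exists>s r ts. at t1 (ps k) (Nd s r ts) \<and> \<tau> k \<in> snd s \<and> tr r (is k) (\<tau> k) (\<tau> (Suc k))" for k
  proof -
    consider "ps k = []" | "ps k = [1]" | "ps k = [1,0]" | "ps k = [1,0,0]" using inC[of k] by blast
    then show ?thesis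
    proof cases
      case 1 then show ?thesis using at0 t0[of k] by (intro exI) (auto simp: \<tau>_def)
    next
      case 2 then show ?thesis using at1 t1'[of k] by (intro exI) (auto simp: \<tau>_def)
    next
      case 3 then show ?thesis using at2 t2[of k] by (intro exI) (auto simp: \<tau>_def)
    next
      case 4 then show ?thesis using at3 t3[of k] by (intro exI) (auto simp: \<tau>_def)
    qed
  qed
  have P: "ps k = [] \<Longrightarrow> \<exists>s r ts. at t1 (ps k) (Nd s r ts) \<and> prog r (is k) (\<tau> k) (\<tau> (Suc k))" for k
    using at0 t0[of k] by (intro exI) (auto simp: \<tau>_def)
  have U: "\<exists>n\<ge>m. ps n = []" for m
  proof -
    consider "ps m = []" | "ps m = [1]" | "ps m = [1,0]" | "ps m = [1,0,0]" using inC[of m] by blast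
    then show ?thesis
    proof cases
      case 1 then show ?thesis by auto
    next
      case 2 then have "ps (Suc (Suc (Suc m))) = []" using t1' t2 t3 by blast
      then show ?thesis by (intro exI[of _ "Suc (Suc (Suc m))"]) simp
    next
      case 3 then have "ps (Suc (Suc m)) = []" using t2 t3 by blast
      then show ?thesis by (intro exI[of _ "Suc (Suc m)"]) simp
    next
      case 4 then have "ps (Suc m) = []" using t3 by blast
      then show ?thesis by (intro exI[of _ "Suc m"]) simp
    qed
  qed
  have "infinite {k. 0 \<le> k \<and> (\<exists>s r ts. at t1 (ps k) (Nd s r ts) \<and> prog r (is k) (\<tau> k) (\<tau> (Suc k)))}"
    by (rule unb_inf) (use U P in blast)
  then show "\<exists>n \<tau>. (\<forall>k\<ge>n. \<exists>s r ts. at t1 (ps k) (Nd s r ts) \<and> \<tau> k \<in> snd s \<and> tr r (is k) (\<tau> k) (\<tau> (Suc k))) \<and>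
        infinite {k. n \<le> k \<and> (\<exists>s r ts. at t1 (ps k) (Nd s r ts) \<and> prog r (is k) (\<tau> k) (\<tau> (Suc k)))}"
    using A by blast
qed

lemma cprov1: "cprov no_cut ({fA},{fB})"
  unfolding cprov_def using cwf_t1 trace_t1 by (intro exI[of _ t1]) (simp add: t1_def)


theorem mainTheorem8:
  shows "((\<exists>s. \<not> gprov no_cut s \<and> cprov no_cut s) \<and>
          (\<exists>s. \<not> gprov fl_cut s \<and> cprov no_cut s)) \<and>
         (\<exists>s. gprov any_cut s \<and> cprov any_cut s \<and> \<not> gprov no_cut s \<and> \<not> cprov no_cut s)"
  using not_gprov1 not_gprov1' cprov1 T2_pos not_gprov2 not_cprov2 by blast

end
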